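(* Let $n=3N^3$ for an integer $N\ge1$, let $\mathcal{A}\in\mathbb{C}^{n\times n}$, $\mathcal{B}\in\mathbb{C}^{N^3\times n}$, let $M_0\in\mathbb{R}^{n\times n}$ be diagonal with positive diagonal entries, and let $\gamma>0$. Assume $\mathcal{B}\mathcal{A}=0$, and let $\mathcal{H}:=\ker\mathcal{A}'\cap\ker\mathcal{B}$; assume $\dim\mathcal{H}$ is either $0$ or bounded independently of $N$. Let the eigenvalues of the Hermitian positive semidefinite matrix $\mathcal{A}M_0\mathcal{A}'$ be $N_0^{\mathcal{A}}$ zeros followed by the positive eigenvalues $\lambda^{\mathcal{A}}_1\le\cdots\le\lambda^{\mathcal{A}}_{N_1^{\mathcal{A}}}$, and let the eigenvalues of $\mathcal{B}'\mathcal{B}$ be $N_0^{\mathcal{B}}$ zeros followed by the positive eigenvalues $\lambda^{\mathcal{B}}_1\le\cdots\le\lambda^{\mathcal{B}}_{N_1^{\mathcal{B}}}$ (all counted with multiplicity). Then the eigenvalues of $\mathcal{A}M_0\mathcal{A}'+\gamma\mathcal{B}'\mathcal{B}$, listed in nondecreasing order, are $$\underbrace{0,\dots,0}_{\dim\mathcal{H}\text{ zeros}}<\lambda_1\le\lambda_2\le\cdots\le\lambda_m\le\cdots,$$ and $$\{\lambda_1,\dots,\lambda_m,\dots\}=\{\lambda^{\mathcal{A}}_1,\dots,\lambda^{\mathcal{A}}_{N_1^{\mathcal{A}}}\}\cup\{\gamma\lambda^{\mathcal{B}}_1,\dots,\gamma\lambda^{\mathcal{B}}_{N_1^{\mathc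al{B}}}\}.$$
   Context: For a complex matrix $X$, $X'$ denotes its conjugate transpose; $\ker X$ is its null space. *)

theory Defs
  imports "Jordan_Normal_Form.Jordan_Normal_Form" "Jordan_Normal_Form.Schur_Decomposition" "Jordan_Normal_Form.Matrix_Kernel"
    "HOL-Library.Multiset"
begin

definition eigvals :: "complex mat \<Rightarrow> complex multiset" where
  "eigvals C = proots (char_poly C)"

definition pos_eigvals :: "complex mat \<Rightarrow> complex multiset" where
  "pos_eigvals C = filter_mset (\<lambda>z. z \<in> \<real> \<and> 0 < Re z) (eigvals C)"

definition subspace_dim :: "nat \<Rightarrow> complex vec set \<Rightarrow> nat" where
  "subspace_dim n W = vectorspace.dim class_ring ((module_vec TYPE(complex) n)\<lparr>carrier := W\<rparr>)"

end

theory Submission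
  imports Defs "Jordan_Normal_Form.Jordan_Normal_Form_Existence" "Jordan_Normal_Form.Jordan_Normal_Form_Uniqueness" begin


lemma adj_carrier[simp]: "A \<in> carrier_mat r c \<Longrightarrow> mat_adjoint (A::complex mat) \<in> carrier_mat c r"
  unfolding mat_adjoint_def by auto
lemma adj_dims[simp]: "dim_row (mat_adjoint (A::complex mat)) = dim_col A"
   "dim_col (mat_adjoint (A::complex mat)) = dim_row A"
  unfolding mat_adjoint_def by auto
lemma adj_index[simp]: "i < dim_col A \<Longrightarrow> j < dim_row A \<Longrightarrow> mat_adjoint (A::complex mat) $$ (i,j) = cnj (A $$ (j,i))"
  unfolding mat_adjoint_def by (auto simp: mat_of_rows_index)

lemma adj_adj[simp]: "mat_adjoint (mat_adjoint (A::complex mat)) = A"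
  by (rule eq_matI, auto)

lemma adj_mult: assumes "A \<in> carrier_mat r k" "B \<in> carrier_mat k c"
  shows "mat_adjoint ((A::complex mat) * B) = mat_adjoint B * mat_adjoint A"
  using assms by (intro eq_matI) (auto simp: scalar_prod_def intro!: sum.cong)

lemma adj_add: assumes "A \<in> carrier_mat r c" "B \<in> carrier_mat r c"
  shows "mat_adjoint ((A::complex mat) + B) = mat_adjoint A + mat_adjoint B"
  using assms by (intro eq_matI) auto

lemma adj_smult_real: "mat_adjoint (complex_of_real g \<cdot>\<^sub>m (A::complex mat)) = complex_of_real g \<cdot>\<^sub>m mat_adjoint A"
  by (intro eq_matI) auto

lemma adj_diag: assumes "M \<in> carrier_mat n n" "diagonal_mat M" "\<forall>i<n. M $$ (i,i) \<in> \<real>"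
  shows "mat_adjoint (M::complex mat) = M"
  using assms by (intro eq_matI) (auto simp: diagonal_mat_def Reals_cnj_iff, case_tac "i = j", auto)

lemma cnj_mult_self: "cnj z * z = (complex_of_real (cmod z))^2"
  by (metis complex_norm_square mult.commute of_real_power)

definition inner :: "complex vec \<Rightarrow> complex vec \<Rightarrow> complex" where
  "inner u w = (\<Sum>i<dim_vec w. cnj (u $ i) * w $ i)"

lemma inner_adj: assumes X: "X \<in> carrier_mat r c" and v: "v \<in> carrier_vec r" and u: "u \<in> carrier_vec c"
  shows "inner v (X *\<^sub>v u) = inner (mat_adjoint X *\<^sub>v v) u"
proof -
  have "inner v (X *\<^sub>v u) = (\<Sum>i<r. \<Sum>j<c. cnj (v $ i) * (X $$ (i,j) * u $ j))"
    using X v u by (simp add: inner_def scalar_prod_def sum_distrib_left atLeast0LessThan)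
  also have "\<dots> = (\<Sum>j<c. \<Sum>i<r. cnj (v $ i) * (X $$ (i,j) * u $ j))" by (rule sum.swap)
  also have "\<dots> = inner (mat_adjoint X *\<^sub>v v) u"
    using X v u by (simp add: inner_def scalar_prod_def sum_distrib_left atLeast0LessThan mult_ac)
  finally show ?thesis .
qed

lemma inner_self: "inner v v = complex_of_real (\<Sum>i<dim_vec v. (cmod (v $ i))^2)"
  unfolding inner_def of_real_sum by (intro sum.cong refl) (simp add: cnj_mult_self)

lemma inner_self_nonneg: "inner v v \<in> \<real>" "0 \<le> Re (inner v v)"
  unfolding inner_self by (auto intro: sum_nonneg)

lemma inner_self_zero: assumes "v \<in> carrier_vec n" "inner v v = 0" shows "v = 0\<^sub>v n"
proof -
  have "(\<Sum>i<n. (cmod (v $ i))^2) = 0" using assms unfolding inner_self by (simp only: of_real_eq_0_iff carrier_vecD)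
  hence "\<forall>i\<in>{..<n}. (cmod (v $ i))^2 = 0" by (subst (asm) sum_nonneg_eq_0_iff) auto
  thus ?thesis using assms by (intro eq_vecI) auto
qed

lemma inner_diag: assumes "M \<in> carrier_mat n n" "diagonal_mat M" "w \<in> carrier_vec n"
  shows "inner w (M *\<^sub>v w) = (\<Sum>i<n. M $$ (i,i) * complex_of_real ((cmod (w $ i))^2))"
proof -
  have "\<And>i. i < n \<Longrightarrow> (M *\<^sub>v w) $ i = M $$ (i,i) * w $ i"
  proof -
    fix i assume i: "i < n"
    have "(M *\<^sub>v w) $ i = (\<Sum>j\<in>{0..<n}. M $$ (i,j) * w $ j)" using assms i by (simp add: scalar_prod_def)
    also have "\<dots> = (\<Sum>j\<in>{0..<n}. if j = i then M $$ (i,i) * w $ i else 0)"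
      using assms i by (intro sum.cong refl) (auto simp: diagonal_mat_def)
    also have "\<dots> = M $$ (i,i) * w $ i" using i by simp
    finally show "(M *\<^sub>v w) $ i = M $$ (i,i) * w $ i" .
  qed
  thus ?thesis using assms unfolding inner_def
    by (auto intro!: sum.cong simp: cnj_mult_self)
qed



lemma kernel_dim_subspace: "kernel_dim A = subspace_dim (dim_col A) (mat_kernel A)"
  unfolding kernel_dim_def subspace_dim_def by simp

lemma count_zero_prod: "count (proots (\<Prod>(n, a)\<leftarrow>n_as. [:- a, 1:] ^ n)) (0::complex)
   = sum_list (map fst (filter (\<lambda>(n,e). e = 0) n_as))"
proof (induct n_as)
  case Nil
  then show ?case by simp
next
  case (Cons na n_as)
  obtain n a where na: "na = (n,a)" by force
  have nz: "[:- a, 1:] ^ n \<noteq> 0" by simp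
  have nz2: "(\<Prod>(n, a)\<leftarrow>n_as. [:- a, 1:] ^ n) \<noteq> (0 :: complex poly)"
    by (induct n_as, auto)
  show ?case using Cons unfolding na
    by (simp add: proots_mult[OF nz nz2] proots_power proots_linear_factor)
qed

lemma ker_pow_eq: assumes C: "C \<in> carrier_mat n n"
  and sq: "\<And>v. v \<in> carrier_vec n \<Longrightarrow> C *\<^sub>v (C *\<^sub>v v) = 0\<^sub>v n \<Longrightarrow> C *\<^sub>v v = 0\<^sub>v n"
  and k: "k \<ge> 1"
shows "mat_kernel (C ^\<^sub>m k) = mat_kernel C"
  using k
proof (induct k)
  case 0 then show ?case by simp
next
  case (Suc k)
  show ?case
  proof (cases "k = 0")
    case True
    then show ?thesis using C by simp
  next
    case False
    hence IH: "mat_kernel (C ^\<^sub>m k) = mat_kernel C" using Suc by simp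
    have Ck: "C ^\<^sub>m k \<in> carrier_mat n n" using C by simp
    have "v \<in> mat_kernel (C ^\<^sub>m Suc k) \<longleftrightarrow> v \<in> mat_kernel C" for v
    proof -
      have "v \<in> mat_kernel (C ^\<^sub>m Suc k) \<longleftrightarrow> v \<in> carrier_vec n \<and> C ^\<^sub>m k *\<^sub>v (C *\<^sub>v v) = 0\<^sub>v n"
        using C Ck by (auto simp: mat_kernel_def assoc_mult_mat_vec[OF Ck C])
      also have "\<dots> \<longleftrightarrow> v \<in> carrier_vec n \<and> C *\<^sub>v v \<in> mat_kernel (C ^\<^sub>m k)"
        using C Ck by (auto simp: mat_kernel_def)
      also have "\<dots> \<longleftrightarrow> v \<in> carrier_vec n \<and> C *\<^sub>v (C *\<^sub>v v) = 0\<^sub>v n"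
        unfolding IH using C by (auto simp: mat_kernel_def)
      also have "\<dots> \<longleftrightarrow> v \<in> mat_kernel C"
        using C sq by (auto simp: mat_kernel_def)
      finally show ?thesis .
    qed
    thus ?thesis by auto
  qed
qed

lemma count_zero_kernel: assumes C: "C \<in> carrier_mat n n"
  and sq: "\<And>v. v \<in> carrier_vec n \<Longrightarrow> C *\<^sub>v (C *\<^sub>v v) = 0\<^sub>v n \<Longrightarrow> C *\<^sub>v v = 0\<^sub>v n"
shows "count (eigvals C) 0 = kernel_dim C"
proof -
  obtain as where cp: "char_poly C = (\<Prod> a \<leftarrow> as. [:- a, 1:])"
    using char_poly_factorized[OF C] by blast
  obtain n_as where jnf: "jordan_nf C n_as" using jordan_nf_exists[OF C cp] by blast
  have cm: "char_matrix C 0 = C" using C unfolding char_matrix_def by (intro eq_matI) auto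
  have "count (eigvals C) 0 = sum_list (map fst (filter (\<lambda>(n,e). e = 0) n_as))"
    unfolding eigvals_def jordan_nf_char_poly[OF jnf] count_zero_prod ..
  also have "\<dots> = (\<Sum> m \<leftarrow> map fst [(m, e)\<leftarrow>n_as . e = 0]. min (max n 1) m)"
  proof -
    from jnf[unfolded jordan_nf_def] have sim: "similar_mat C (jordan_matrix n_as)" by auto
    from similar_matD[OF sim] obtain n' where "C \<in> carrier_mat n' n'" "jordan_matrix n_as \<in> carrier_mat n' n'" by auto
    with C have "sum_list (map fst n_as) = n" by (metis carrier_matD(1) jordan_matrix_dim(1))
    hence le: "\<forall>m \<in> set (map fst n_as). m \<le> n"
      using canonically_ordered_monoid_add_class.member_le_sum_list by metis
    have "\<forall>m \<in> set (map fst [(m, e)\<leftarrow>n_as . e = 0]). min (max n 1) m = m"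
      using le by auto
    note H = this
    have "map (min (max n 1)) (map fst [(m, e)\<leftarrow>n_as . e = 0]) = map fst [(m, e)\<leftarrow>n_as . e = 0]"
      by (rule map_idI) (use H in blast)
    thus ?thesis by (metis (no_types, lifting) case_prod_unfold)
  qed
  also have "\<dots> = dim_gen_eigenspace C 0 (max n 1)" by (rule dim_gen_eigenspace[OF jnf, symmetric])
  also have "\<dots> = kernel_dim C"
  proof -
    have "mat_kernel (C ^\<^sub>m (max n 1)) = mat_kernel C" using ker_pow_eq[OF C sq, of "max n 1"] by simp
    moreover have "dim_col (C ^\<^sub>m (max n 1)) = dim_col C" using C by simp
    ultimately show ?thesis unfolding dim_gen_eigenspace_def cm kernel_dim_def by simp
  qed
  finally show ?thesis .
qed



lemma proots_linear_list: "proots (\<Prod>a\<leftarrow>as. [:- a, 1:]) = mset (as :: complex list)"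
proof (induct as)
  case Nil then show ?case by simp
next
  case (Cons a as)
  have nz: "(\<Prod>a\<leftarrow>as. [:- a, 1:]) \<noteq> (0 :: complex poly)"
    by (subst prod_list_zero_iff) auto
  have "(\<Prod>a\<leftarrow>a # as. [:- a, 1:]) = [:- a, 1:] * (\<Prod>a\<leftarrow>as. [:- a, 1:])" by simp
  have "proots (\<Prod>a\<leftarrow>a # as. [:- a, 1:]) = proots [:- a, 1:] + proots (\<Prod>a\<leftarrow>as. [:- a, 1:])"
    unfolding list.map prod_list.Cons by (rule proots_mult) (use nz in simp_all)
  thus ?case using Cons by (simp add: proots_linear_factor)
qed

lemma eigvals_upper_triangular: assumes "B \<in> carrier_mat n n" "upper_triangular B"
  shows "eigvals B = mset (diag_mat B)"
  unfolding eigvals_def char_poly_upper_triangular[OF assms] proots_linear_list ..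

lemma eigvals_smult: assumes C: "C \<in> carrier_mat n n"
  shows "eigvals (c \<cdot>\<^sub>m C) = image_mset (\<lambda>z. c * z) (eigvals C)"
proof -
  obtain es where cp: "char_poly C = (\<Prod> a \<leftarrow> es. [:- a, 1:])"
    using char_poly_factorized[OF C] by blast
  define B where "B = schur_upper_triangular C es"
  note sch = schur_upper_triangular[OF C cp, folded B_def]
  from sch(3) obtain P Q where wit: "similar_mat_wit C B P Q" unfolding similar_mat_def by blast
  from similar_mat_witD2[OF C wit] have PQ: "P \<in> carrier_mat n n" "Q \<in> carrier_mat n n"
    "P * Q = 1\<^sub>m n" "Q * P = 1\<^sub>m n" "C = P * B * Q" by auto
  have "c \<cdot>\<^sub>m C = P * (c \<cdot>\<^sub>m B) * Q"
  proof -
    have "c \<cdot>\<^sub>m C = c \<cdot>\<^sub>m (P * B) * Q" unfolding PQ(5)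
      by (rule mult_smult_assoc_mat[symmetric, of _ n n _ n]) (use PQ sch(1) in auto)
    also have "c \<cdot>\<^sub>m (P * B) = P * (c \<cdot>\<^sub>m B)" using PQ sch(1) by (simp add: mult_smult_distrib)
    finally show ?thesis .
  qed
  hence "similar_mat_wit (c \<cdot>\<^sub>m C) (c \<cdot>\<^sub>m B) P Q"
    unfolding similar_mat_wit_def Let_def using PQ sch(1) C by auto
  hence sim2: "similar_mat (c \<cdot>\<^sub>m C) (c \<cdot>\<^sub>m B)" unfolding similar_mat_def by blast
  have ut2: "upper_triangular (c \<cdot>\<^sub>m B)" using sch(2) sch(1) unfolding upper_triangular_def by auto
  have cB: "c \<cdot>\<^sub>m B \<in> carrier_mat n n" using sch(1) by simp
  have "eigvals (c \<cdot>\<^sub>m C) = eigvals (c \<cdot>\<^sub>m B)"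
    unfolding eigvals_def char_poly_similar[OF sim2] ..
  also have "\<dots> = mset (diag_mat (c \<cdot>\<^sub>m B))" by (rule eigvals_upper_triangular[OF cB ut2])
  also have "diag_mat (c \<cdot>\<^sub>m B) = map (\<lambda>z. c * z) (diag_mat B)"
    using sch(1) unfolding diag_mat_def by auto
  also have "mset \<dots> = image_mset (\<lambda>z. c * z) (eigvals B)"
    using eigvals_upper_triangular[OF sch(1) sch(2)] by simp
  also have "eigvals B = eigvals C" unfolding eigvals_def char_poly_similar[OF sch(3)] ..
  finally show ?thesis .
qed



lemma sum_const_poly: "(\<Sum>k\<in>S. [:f k:]) = [:(\<Sum>k\<in>S. f k):]"
  by (induct S rule: infinite_finite_induct) auto

lemma mat_rearr: assumes "A \<in> carrier_mat n n" "B \<in> carrier_mat n n" "C \<in> carrier_mat n n"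
  shows "(A + B) + (C + 0\<^sub>m n n) = A + (C + (B :: 'a :: comm_ring_1 mat))"
  using assms by (intro eq_matI) (auto simp: algebra_simps)

lemma char_poly_prod_zero:
  fixes P Q :: "complex mat"
  assumes P: "P \<in> carrier_mat n n" and Q: "Q \<in> carrier_mat n n" and PQ: "P * Q = 0\<^sub>m n n"
  shows "char_poly P * char_poly Q = [:0,1:]^n * char_poly (P + Q)"
proof -
  define X where "X = [:0,1:] \<cdot>\<^sub>m (1\<^sub>m n :: complex poly mat)"
  define Pm where "Pm = map_mat (\<lambda>a. [:- a:]) P"
  define Qm where "Qm = map_mat (\<lambda>a. [:- a:]) Q"
  have X: "X \<in> carrier_mat n n" and Pm: "Pm \<in> carrier_mat n n" and Qm: "Qm \<in> carrier_mat n n"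
    using P Q unfolding X_def Pm_def Qm_def by auto
  have cP: "char_poly_matrix P = X + Pm" using P unfolding char_poly_matrix_def X_def Pm_def by simp
  have cQ: "char_poly_matrix Q = X + Qm" using Q unfolding char_poly_matrix_def X_def Qm_def by simp
  have cPQ: "char_poly_matrix (P + Q) = X + (Pm + Qm)" using P Q unfolding char_poly_matrix_def X_def Pm_def Qm_def
    by (intro eq_matI) auto
  have PmQm: "Pm * Qm = 0\<^sub>m n n"
  proof (rule eq_matI)
    fix i j assume i: "i < dim_row (0\<^sub>m n n :: complex poly mat)" and j: "j < dim_col (0\<^sub>m n n :: complex poly mat)"
    have "(Pm * Qm) $$ (i,j) = (\<Sum>k\<in>{0..<n}. [:- P $$ (i,k):] * [:- Q $$ (k,j):])"
      using i j P Q Pm Qm unfolding Pm_def Qm_def by (simp add: scalar_prod_def)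
    also have "\<dots> = [:(\<Sum>k\<in>{0..<n}. P $$ (i,k) * Q $$ (k,j)):]"
      by (simp add: sum_const_poly[symmetric] mult.commute)
    also have "(\<Sum>k\<in>{0..<n}. P $$ (i,k) * Q $$ (k,j)) = (P * Q) $$ (i,j)"
      using i j P Q by (simp add: scalar_prod_def)
    finally show "(Pm * Qm) $$ (i,j) = 0\<^sub>m n n $$ (i,j)" using PQ i j by simp
  qed (use Pm Qm in auto)
  have XP: "X * Pm = Pm * X" using Pm unfolding X_def
    by (simp add: mult_smult_distrib[OF Pm one_carrier_mat] mult_smult_assoc_mat[OF one_carrier_mat Pm])
  have XX: "X * X \<in> carrier_mat n n" "X * Qm \<in> carrier_mat n n" "X * Pm \<in> carrier_mat n n"
    using X Pm Qm by auto
  have "char_poly_matrix P * char_poly_matrix Q = X * (X + Qm) + Pm * (X + Qm)"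
    unfolding cP cQ using X Pm Qm by (intro add_mult_distrib_mat[of _ n n]) auto
  also have "\<dots> = (X * X + X * Qm) + (X * Pm + 0\<^sub>m n n)"
    unfolding PmQm[symmetric] XP using X Pm Qm
    by (simp add: mult_add_distrib_mat[of _ n n])
  also have "\<dots> = X * X + (X * Pm + X * Qm)"
    using XX by (rule mat_rearr)
  also have "\<dots> = X * (X + (Pm + Qm))"
    using X Pm Qm by (simp add: mult_add_distrib_mat[of _ n n])
  finally have eq: "char_poly_matrix P * char_poly_matrix Q = X * char_poly_matrix (P + Q)"
    unfolding cPQ .
  have "char_poly P * char_poly Q = det (char_poly_matrix P * char_poly_matrix Q)"
    unfolding char_poly_def using P Q by (simp add: det_mult[of _ n])
  also have "\<dots> = det X * char_poly (P + Q)"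
    unfolding eq char_poly_def using P Q X by (simp add: det_mult[of _ n])
  also have "det X = [:0,1:]^n" unfolding X_def by (simp add: det_smult)
  finally show ?thesis .
qed

lemma smult_mat_vec: assumes "C \<in> carrier_mat r c" "v \<in> carrier_vec c"
  shows "(k \<cdot>\<^sub>m C) *\<^sub>v v = k \<cdot>\<^sub>v (C *\<^sub>v (v :: complex vec))"
  using assms by (intro eq_vecI) (auto simp: scalar_prod_def sum_distrib_left mult_ac)

lemma inner_add: assumes "x \<in> carrier_vec n" "y \<in> carrier_vec n"
  shows "inner v (x + y) = inner v x + inner v y"
  using assms unfolding inner_def by (simp add: sum.distrib algebra_simps)

lemma inner_smult: "inner v (k \<cdot>\<^sub>v y) = k * inner v y"
  unfolding inner_def by (simp add: sum_distrib_left mult_ac)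

definition psd_on :: "nat \<Rightarrow> complex mat \<Rightarrow> bool" where
  "psd_on n C = (\<forall>v \<in> carrier_vec n. inner v (C *\<^sub>v v) \<in> \<real> \<and> 0 \<le> Re (inner v (C *\<^sub>v v)))"

lemma psd_eig: assumes C: "C \<in> carrier_mat n n" and psd: "psd_on n C" and z: "z \<in># eigvals C"
  shows "z \<in> \<real> \<and> 0 \<le> Re z"
proof -
  have nz: "char_poly C \<noteq> 0" using degree_monic_char_poly[OF C] by auto
  from z have "poly (char_poly C) z = 0" unfolding eigvals_def set_count_proots[OF nz] by simp
  hence "eigenvalue C z" using eigenvalue_root_char_poly[OF C] by simp
  then obtain v where ev: "eigenvector C v z" unfolding eigenvalue_def by blast
  hence v: "v \<in> carrier_vec n" "v \<noteq> 0\<^sub>v n" "C *\<^sub>v v = z \<cdot>\<^sub>v v" using C unfolding eigenvector_def by auto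
  define a where "a = inner v (C *\<^sub>v v)"
  define b where "b = inner v v"
  have a: "a \<in> \<real>" "0 \<le> Re a" using psd v unfolding psd_on_def a_def by auto
  have b: "b \<in> \<real>" "0 \<le> Re b" unfolding b_def by (rule inner_self_nonneg)+
  have "b \<noteq> 0" using inner_self_zero[OF v(1)] v(2) unfolding b_def by auto
  have ab: "a = z * b" unfolding a_def b_def v(3) inner_smult ..
  hence zab: "z = a / b" using \<open>b \<noteq> 0\<close> by simp
  obtain ra where ra: "a = complex_of_real ra" using a(1) by (auto elim: Reals_cases)
  obtain rb where rb: "b = complex_of_real rb" using b(1) by (auto elim: Reals_cases)
  have "rb > 0" using b(2) \<open>b \<noteq> 0\<close> unfolding rb by auto
  moreover have "ra \<ge> 0" using a(2) unfolding ra by auto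
  ultimately show ?thesis unfolding zab ra rb by (simp del: of_real_divide add: of_real_divide[symmetric])
qed

lemma psd_pos_eigvals: assumes C: "C \<in> carrier_mat n n" and psd: "psd_on n C"
  shows "pos_eigvals C = filter_mset (\<lambda>z. z \<noteq> 0) (eigvals C)"
  unfolding pos_eigvals_def
proof (rule filter_mset_cong[OF refl])
  fix z assume "z \<in># eigvals C"
  from psd_eig[OF C psd this] show "(z \<in> \<real> \<and> 0 < Re z) = (z \<noteq> 0)"
    by (auto simp: complex_is_Real_iff complex_eq_iff)
qed

lemma herm_sq: fixes C :: "complex mat" assumes C: "C \<in> carrier_mat n n" and h: "mat_adjoint C = C"
  and v: "v \<in> carrier_vec n" and z: "C *\<^sub>v (C *\<^sub>v v) = 0\<^sub>v n"
shows "C *\<^sub>v v = 0\<^sub>v n"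
proof -
  have Cv: "C *\<^sub>v v \<in> carrier_vec n" using C v by simp
  have "inner (C *\<^sub>v v) (C *\<^sub>v v) = inner v (C *\<^sub>v (C *\<^sub>v v))"
    using inner_adj[OF C v Cv] h by simp
  also have "\<dots> = 0" unfolding z inner_def by simp
  finally show ?thesis by (rule inner_self_zero[OF Cv])
qed

lemma main_gen:
  fixes A B M0 :: "complex mat" and \<gamma> :: real
  assumes A: "A \<in> carrier_mat n n"
    and B: "B \<in> carrier_mat m n"
    and M0: "M0 \<in> carrier_mat n n"
    and diag: "diagonal_mat M0"
    and pos: "\<forall>i < n. M0 $$ (i, i) \<in> \<real> \<and> 0 < Re (M0 $$ (i, i))"
    and g: "\<gamma> > 0"
    and BA: "B * A = 0\<^sub>m m n"
  shows "eigvals (A * M0 * mat_adjoint A + complex_of_real \<gamma> \<cdot>\<^sub>m (mat_adjoint B * B))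
         = replicate_mset (subspace_dim n (mat_kernel (mat_adjoint A) \<inter> mat_kernel B)) 0
           + pos_eigvals (A * M0 * mat_adjoint A)
           + image_mset (\<lambda>z. complex_of_real \<gamma> * z) (pos_eigvals (mat_adjoint B * B))"
proof -
  define Ad where "Ad = mat_adjoint A"
  define Bd where "Bd = mat_adjoint B"
  define P where "P = A * M0 * Ad"
  define Q where "Q = Bd * B"
  define c where "c = complex_of_real \<gamma>"
  define G where "G = c \<cdot>\<^sub>m Q"
  define M where "M = P + G"
  have Ad: "Ad \<in> carrier_mat n n" and Bd: "Bd \<in> carrier_mat n m" using A B unfolding Ad_def Bd_def by auto
  have P: "P \<in> carrier_mat n n" and Q: "Q \<in> carrier_mat n n" and G: "G \<in> carrier_mat n n"
    and M: "M \<in> carrier_mat n n"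
    using A B M0 Ad Bd unfolding P_def Q_def G_def M_def by auto
  have c0: "c \<noteq> 0" using g unfolding c_def by simp
  have AdBd: "Ad * Bd = 0\<^sub>m n m"
  proof -
    have "Ad * Bd = mat_adjoint (B * A)" unfolding Ad_def Bd_def using adj_mult[OF B A] ..
    also have "\<dots> = 0\<^sub>m n m" unfolding BA by (intro eq_matI) auto
    finally show ?thesis .
  qed
  have AM: "A * M0 \<in> carrier_mat n n" using A M0 by simp
  have BB: "Bd * B \<in> carrier_mat n n" using Bd B by simp
  have PQ: "P * Q = 0\<^sub>m n n"
  proof -
    have "P * Q = (A * M0) * (Ad * (Bd * B))"
      unfolding P_def Q_def by (rule assoc_mult_mat[OF AM Ad BB])
    also have "Ad * (Bd * B) = (Ad * Bd) * B" by (rule assoc_mult_mat[OF Ad Bd B, symmetric])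
    also have "\<dots> = 0\<^sub>m n n" unfolding AdBd by (rule left_mult_zero_mat[OF B])
    also have "(A * M0) * 0\<^sub>m n n = 0\<^sub>m n n" by (rule right_mult_zero_mat[OF AM])
    finally show ?thesis .
  qed
  have PG: "P * G = 0\<^sub>m n n"
  proof -
    have "P * G = c \<cdot>\<^sub>m (P * Q)" unfolding G_def by (rule mult_smult_distrib[OF P Q])
    also have "\<dots> = 0\<^sub>m n n" unfolding PQ by (intro eq_matI) auto
    finally show ?thesis .
  qed
  have id: "char_poly P * char_poly G = [:0,1:]^n * char_poly M"
    unfolding M_def by (rule char_poly_prod_zero[OF P G PG])
  have nzP: "char_poly P \<noteq> 0" using degree_monic_char_poly[OF P] by auto
  have nzG: "char_poly G \<noteq> 0" using degree_monic_char_poly[OF G] by auto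
  have nzM: "char_poly M \<noteq> 0" using degree_monic_char_poly[OF M] by auto
  have nzX: "([:0,1:] :: complex poly)^n \<noteq> 0" by simp
  have E: "eigvals P + eigvals G = replicate_mset n 0 + eigvals M"
    using arg_cong[OF id, of proots] unfolding eigvals_def
    by (simp add: proots_mult[OF nzP nzG] proots_mult[OF nzX nzM] proots_power repeat_mset_replicate_mset
      proots_linear_factor[of 0, simplified])
  have E2: "filter_mset (\<lambda>z. z \<noteq> 0) (eigvals M) = filter_mset (\<lambda>z. z \<noteq> 0) (eigvals P) + filter_mset (\<lambda>z. z \<noteq> 0) (eigvals G)"
    using arg_cong[OF E, of "filter_mset (\<lambda>z. z \<noteq> 0)"] by simp
  have quadP: "inner v (P *\<^sub>v v) = complex_of_real (\<Sum>i<n. Re (M0 $$ (i,i)) * (cmod ((Ad *\<^sub>v v) $ i))^2)"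
    if v: "v \<in> carrier_vec n" for v
  proof -
    have w: "Ad *\<^sub>v v \<in> carrier_vec n" using Ad v by simp
    have "P *\<^sub>v v = (A * M0) *\<^sub>v (Ad *\<^sub>v v)" unfolding P_def by (rule assoc_mult_mat_vec[OF AM Ad v])
    also have "\<dots> = A *\<^sub>v (M0 *\<^sub>v (Ad *\<^sub>v v))" by (rule assoc_mult_mat_vec[OF A M0 w])
    finally have Pv: "P *\<^sub>v v = A *\<^sub>v (M0 *\<^sub>v (Ad *\<^sub>v v))" .
    have Mw: "M0 *\<^sub>v (Ad *\<^sub>v v) \<in> carrier_vec n" using M0 w by simp
    have "inner v (P *\<^sub>v v) = inner (Ad *\<^sub>v v) (M0 *\<^sub>v (Ad *\<^sub>v v))"
      unfolding Pv inner_adj[OF A v Mw] Ad_def[symmetric] ..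
    also have "\<dots> = (\<Sum>i<n. M0 $$ (i,i) * complex_of_real ((cmod ((Ad *\<^sub>v v) $ i))^2))"
      by (rule inner_diag[OF M0 diag w])
    also have "\<dots> = complex_of_real (\<Sum>i<n. Re (M0 $$ (i,i)) * (cmod ((Ad *\<^sub>v v) $ i))^2)"
      unfolding of_real_sum
    proof (rule sum.cong[OF refl])
      fix i assume "i \<in> {..<n}"
      hence "M0 $$ (i,i) \<in> \<real>" using pos by auto
      thus "M0 $$ (i,i) * complex_of_real ((cmod ((Ad *\<^sub>v v) $ i))^2)
        = complex_of_real (Re (M0 $$ (i,i)) * (cmod ((Ad *\<^sub>v v) $ i))^2)"
        by (auto elim!: Reals_cases)
    qed
    finally show ?thesis .
  qed
  have quadQ: "inner v (Q *\<^sub>v v) = inner (B *\<^sub>v v) (B *\<^sub>v v)" if v: "v \<in> carrier_vec n" for v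
  proof -
    have Qv: "Q *\<^sub>v v = Bd *\<^sub>v (B *\<^sub>v v)" unfolding Q_def by (rule assoc_mult_mat_vec[OF Bd B v])
    have Bv: "B *\<^sub>v v \<in> carrier_vec m" using B v by simp
    show ?thesis unfolding Qv inner_adj[OF Bd v Bv] unfolding Bd_def adj_adj ..
  qed
  have quadG: "inner v (G *\<^sub>v v) = c * inner (B *\<^sub>v v) (B *\<^sub>v v)" if v: "v \<in> carrier_vec n" for v
    unfolding G_def smult_mat_vec[OF Q v] inner_smult quadQ[OF v] ..
  have psdP: "psd_on n P" unfolding psd_on_def
  proof
    fix v :: "complex vec" assume v: "v \<in> carrier_vec n"
    have "0 \<le> (\<Sum>i<n. Re (M0 $$ (i,i)) * (cmod ((Ad *\<^sub>v v) $ i))^2)"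
      using pos by (intro sum_nonneg) auto
    thus "inner v (P *\<^sub>v v) \<in> \<real> \<and> 0 \<le> Re (inner v (P *\<^sub>v v))" unfolding quadP[OF v] by simp
  qed
  have psdQ: "psd_on n Q" unfolding psd_on_def
  proof
    fix v :: "complex vec" assume v: "v \<in> carrier_vec n"
    show "inner v (Q *\<^sub>v v) \<in> \<real> \<and> 0 \<le> Re (inner v (Q *\<^sub>v v))"
      unfolding quadQ[OF v] using inner_self_nonneg by blast
  qed
  have E3: "filter_mset (\<lambda>z. z \<noteq> 0) (eigvals P) = pos_eigvals P" using psd_pos_eigvals[OF P psdP] by simp
  have E4: "filter_mset (\<lambda>z. z \<noteq> 0) (eigvals G) = image_mset (\<lambda>z. c * z) (pos_eigvals Q)"
    unfolding G_def eigvals_smult[OF Q] psd_pos_eigvals[OF Q psdQ] filter_mset_image_mset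
    using c0 by (intro arg_cong[where f="image_mset _"] filter_mset_cong) auto
  have adjP: "mat_adjoint P = P"
  proof -
    have "mat_adjoint P = mat_adjoint Ad * mat_adjoint (A * M0)"
      unfolding P_def by (rule adj_mult[OF AM Ad])
    also have "\<dots> = A * (mat_adjoint M0 * Ad)"
      unfolding Ad_def adj_adj adj_mult[OF A M0] ..
    also have "mat_adjoint M0 = M0" using adj_diag[OF M0 diag] pos by auto
    also have "A * (M0 * Ad) = P" unfolding P_def by (rule assoc_mult_mat[OF A M0 Ad, symmetric])
    finally show ?thesis .
  qed
  have adjQ: "mat_adjoint Q = Q" unfolding Q_def adj_mult[OF Bd B] unfolding Bd_def adj_adj ..
  have adjG: "mat_adjoint G = G"
    unfolding G_def c_def adj_smult_real adjQ ..
  have adjM: "mat_adjoint M = M" unfolding M_def adj_add[OF P G] adjP adjG ..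
  have cnt: "count (eigvals M) 0 = kernel_dim M"
    by (rule count_zero_kernel[OF M herm_sq[OF M adjM]])
  have ker: "mat_kernel M = mat_kernel Ad \<inter> mat_kernel B"
  proof (intro equalityI subsetI)
    fix v assume "v \<in> mat_kernel M"
    hence v: "v \<in> carrier_vec n" and Mv: "M *\<^sub>v v = 0\<^sub>v n" using mat_kernelD[OF M] by auto
    have "inner v (M *\<^sub>v v) = inner v (P *\<^sub>v v) + inner v (G *\<^sub>v v)"
      unfolding M_def using add_mult_distrib_mat_vec[OF P G v] inner_add[of "P *\<^sub>v v" n "G *\<^sub>v v"] P G v by simp
    also have "\<dots> = complex_of_real ((\<Sum>i<n. Re (M0 $$ (i,i)) * (cmod ((Ad *\<^sub>v v) $ i))^2) + \<gamma> * (\<Sum>i<m. (cmod ((B *\<^sub>v v) $ i))^2))"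
      unfolding quadP[OF v] quadG[OF v] inner_self c_def using B v by simp
    finally have eqn: "inner v (M *\<^sub>v v) = complex_of_real ((\<Sum>i<n. Re (M0 $$ (i,i)) * (cmod ((Ad *\<^sub>v v) $ i))^2) + \<gamma> * (\<Sum>i<m. (cmod ((B *\<^sub>v v) $ i))^2))" .
    have i0: "inner v (M *\<^sub>v v) = 0" unfolding Mv inner_def by simp
    have "complex_of_real ((\<Sum>i<n. Re (M0 $$ (i,i)) * (cmod ((Ad *\<^sub>v v) $ i))^2) + \<gamma> * (\<Sum>i<m. (cmod ((B *\<^sub>v v) $ i))^2)) = 0"
      unfolding eqn[symmetric] by (rule i0)
    hence "(\<Sum>i<n. Re (M0 $$ (i,i)) * (cmod ((Ad *\<^sub>v v) $ i))^2) + \<gamma> * (\<Sum>i<m. (cmod ((B *\<^sub>v v) $ i))^2) = 0"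
      by (simp only: of_real_eq_0_iff)
    moreover have s1: "0 \<le> (\<Sum>i<n. Re (M0 $$ (i,i)) * (cmod ((Ad *\<^sub>v v) $ i))^2)"
      using pos by (intro sum_nonneg) auto
    moreover have s2: "0 \<le> (\<Sum>i<m. (cmod ((B *\<^sub>v v) $ i))^2)" by (intro sum_nonneg) auto
    moreover have "0 \<le> \<gamma> * (\<Sum>i<m. (cmod ((B *\<^sub>v v) $ i))^2)" using g s2 by simp
    ultimately have z1: "(\<Sum>i<n. Re (M0 $$ (i,i)) * (cmod ((Ad *\<^sub>v v) $ i))^2) = 0"
      and z2': "\<gamma> * (\<Sum>i<m. (cmod ((B *\<^sub>v v) $ i))^2) = 0"
      by linarith+
    from z2' g have z2: "(\<Sum>i<m. (cmod ((B *\<^sub>v v) $ i))^2) = 0" by simp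
    have "\<forall>i\<in>{..<n}. Re (M0 $$ (i,i)) * (cmod ((Ad *\<^sub>v v) $ i))^2 = 0"
      using z1 pos by (subst (asm) sum_nonneg_eq_0_iff) auto
    hence H: "\<And>i. i < n \<Longrightarrow> Re (M0 $$ (i,i)) * (cmod ((Ad *\<^sub>v v) $ i))^2 = 0" by blast
    have "Ad *\<^sub>v v = 0\<^sub>v n"
    proof (rule eq_vecI)
      fix i assume "i < dim_vec (0\<^sub>v n :: complex vec)"
      hence i: "i < n" by simp
      have "Re (M0 $$ (i,i)) > 0" using pos i by auto
      hence "(cmod ((Ad *\<^sub>v v) $ i))^2 = 0" using H[OF i] by simp
      thus "(Ad *\<^sub>v v) $ i = 0\<^sub>v n $ i" using i by simp
    qed (use Ad in simp)
    moreover have "inner (B *\<^sub>v v) (B *\<^sub>v v) = 0" unfolding inner_self using z2 B v by simp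
    hence "B *\<^sub>v v = 0\<^sub>v m" using inner_self_zero[of "B *\<^sub>v v" m] B v by simp
    ultimately show "v \<in> mat_kernel Ad \<inter> mat_kernel B" using v Ad B by (auto intro: mat_kernelI)
  next
    fix v assume "v \<in> mat_kernel Ad \<inter> mat_kernel B"
    hence v: "v \<in> carrier_vec n" and Adv: "Ad *\<^sub>v v = 0\<^sub>v n" and Bv: "B *\<^sub>v v = 0\<^sub>v m"
      using mat_kernelD[OF Ad] mat_kernelD[OF B] by auto
    have "P *\<^sub>v v = A *\<^sub>v (M0 *\<^sub>v (Ad *\<^sub>v v))" unfolding P_def using A M0 Ad v
      by (simp add: assoc_mult_mat_vec[of _ n n _ n])
    also have "\<dots> = 0\<^sub>v n" unfolding Adv using A M0 by (intro eq_vecI) (auto simp: scalar_prod_def)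
    finally have Pv: "P *\<^sub>v v = 0\<^sub>v n" .
    have "Q *\<^sub>v v = Bd *\<^sub>v (B *\<^sub>v v)" unfolding Q_def using Bd B v by (simp add: assoc_mult_mat_vec[of _ n m _ n])
    also have "\<dots> = 0\<^sub>v n" unfolding Bv using Bd by (intro eq_vecI) (auto simp: scalar_prod_def)
    finally have Qv: "Q *\<^sub>v v = 0\<^sub>v n" .
    have z0: "c \<cdot>\<^sub>v 0\<^sub>v n = (0\<^sub>v n :: complex vec)" by (intro eq_vecI) auto
    have "M *\<^sub>v v = 0\<^sub>v n" unfolding M_def using add_mult_distrib_mat_vec[OF P G v] smult_mat_vec[OF Q v] Pv Qv
      unfolding G_def by (simp add: z0)
    thus "v \<in> mat_kernel M" using v M by (auto intro: mat_kernelI)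
  qed
  have cnt2: "count (eigvals M) 0 = subspace_dim n (mat_kernel Ad \<inter> mat_kernel B)"
    unfolding cnt kernel_dim_subspace ker[symmetric] using M by simp
  have "eigvals M = filter_mset (\<lambda>z. z = 0) (eigvals M) + filter_mset (\<lambda>z. z \<noteq> 0) (eigvals M)"
    by (rule multiset_partition)
  also have "filter_mset (\<lambda>z. z = 0) (eigvals M) = replicate_mset (count (eigvals M) 0) 0"
    by (rule filter_eq_replicate_mset)
  finally have "eigvals M = replicate_mset (subspace_dim n (mat_kernel Ad \<inter> mat_kernel B)) 0
     + pos_eigvals P + image_mset (\<lambda>z. c * z) (pos_eigvals Q)"
    unfolding cnt2 E2 E3 E4 by (simp add: add.assoc)
  thus ?thesis unfolding M_def P_def G_def Q_def Ad_def Bd_def c_def .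
qed


theorem proposition3p2:
  fixes N :: nat and \<A> \<B> M0 :: "complex mat" and \<gamma> :: real
  assumes "N \<ge> 1"
    and "\<A> \<in> carrier_mat (3 * N ^ 3) (3 * N ^ 3)"
    and "\<B> \<in> carrier_mat (N ^ 3) (3 * N ^ 3)"
    and "M0 \<in> carrier_mat (3 * N ^ 3) (3 * N ^ 3)"
    and "diagonal_mat M0"
    and "\<forall>i < 3 * N ^ 3. M0 $$ (i, i) \<in> \<real> \<and> 0 < Re (M0 $$ (i, i))"
    and "\<gamma> > 0"
    and "\<B> * \<A> = 0\<^sub>m (N ^ 3) (3 * N ^ 3)"
  shows "eigvals (\<A> * M0 * mat_adjoint \<A> + complex_of_real \<gamma> \<cdot>\<^sub>m (mat_adjoint \<B> * \<B>))
         = replicate_mset (subspace_dim (3 * N ^ 3) (mat_kernel (mat_adjoint \<A>) \<inter> mat_kernel \<B>)) 0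
           + pos_eigvals (\<A> * M0 * mat_adjoint \<A>)
           + image_mset (\<lambda>z. complex_of_real \<gamma> * z) (pos_eigvals (mat_adjoint \<B> * \<B>))"
  using main_gen[OF assms(2) assms(3) assms(4) assms(5) assms(6) assms(7) assms(8)] .

end
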